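(* Let $n\geq 2$. (1) For any $\tau\in S_{n-1}$ and any $I\sqcup J=[2,n]$, there exists $\sigma\in S_n$ such that $A^\sigma_{[2,n],\emptyset}=A^\tau_{I,J}$. (2) For any $\sigma\in S_{n-1}$, the only triple $(\tau,I,J)$ with $\tau\in S_{n-1}$, $I\sqcup J=[2,n]$ and $A^\tau_{I,J}=A^\sigma_{[2,n],\emptyset}$ is $\tau=\sigma$, $I=[2,n]$, $J=\emptyset$. (3) For any $\sigma\in S_{n-1}(1,i)$ with $2\leq i\leq n$, the complete list of triples $(\tau,I,J)$ with $\tau\in S_{n-1}$, $I\sqcup J=[2,n]$ and $A^\tau_{I,J}=A^\sigma_{[2,n],\emptyset}$ is indexed by the sequences $2\leq m_1<\dots<m_{i-1}\leq n$, and is given by $$\tau=\sigma C_{m_{i-1}}^{-1}\cdots C_{m_1}^{-1},\quad I=[2,n]\setminus\{m_1,\dots,m_{i-1}\},\quad J=\{m_1,\dots,m_{i-1}\}.$$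
   Context: Let $w_{ij}$, $1\leq i,j\leq n$, be formal variables subject only to $w_{ij}+w_{ji}=0$ (so they span a free abelian group with basis $w_{ij}$, $i<j$). Let $[2,n]=\{2,\dots,n\}$. For $\sigma\in S_n$ and a disjoint decomposition $I\sqcup J=[2,n]$, set $$A^\sigma_{I,J}:=\sum_{i\in I}\sum_{\ell=1}^{i-1}w_{\sigma(\ell)\sigma(i)}-\sum_{j\in J}\sum_{\ell=1}^{j-1}w_{\sigma(\ell)\sigma(j)}.$$ Permutations are composed right-to-left: $(\sigma\tau)(k)=\sigma(\tau(k))$. $S_{n-1}\subset S_n$ is the subgroup of $\tau$ with $\tau(1)=1$, $S_{n-1}(1,i)=\{\tau\cdot(1,i):\tau\in S_{n-1}\}$, and for $m\geq 2$, $C_m$ is the cycle $(1,m,m-1,\dots,2)$. *)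

theory Defs
  imports "HOL-Combinatorics.Permutations"
begin

text \<open>Elements of the free abelian group with basis w_ij (i<j) are represented as
  integer-valued functions on pairs (coefficient of the basis element w_ij at (i,j), i<j).
  The generator w_ij (any i,j) satisfies w_ij + w_ji = 0.\<close>
definition wvar :: "nat \<Rightarrow> nat \<Rightarrow> (nat \<times> nat \<Rightarrow> int)" where
  "wvar i j = (\<lambda>p. if i < j \<and> p = (i, j) then 1
                    else if j < i \<and> p = (j, i) then -1 else 0)"

definition Aexp :: "(nat \<Rightarrow> nat) \<Rightarrow> nat set \<Rightarrow> nat set \<Rightarrow> (nat \<times> nat \<Rightarrow> int)" where
  "Aexp \<sigma> I J = (\<lambda>p. (\<Sum>i\<in>I. \<Sum>l\<in>{1..<i}. wvar (\<sigma> l) (\<sigma> i) p)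
                     - (\<Sum>j\<in>J. \<Sum>l\<in>{1..<j}. wvar (\<sigma> l) (\<sigma> j) p))"

text \<open>S_n as permutations of {1..n}; S_{n-1} is the stabilizer of 1.\<close>
definition Sym :: "nat \<Rightarrow> (nat \<Rightarrow> nat) set" where
  "Sym n = {\<sigma>. \<sigma> permutes {1..n}}"

definition Sym1 :: "nat \<Rightarrow> (nat \<Rightarrow> nat) set" where
  "Sym1 n = {\<tau>. \<tau> permutes {1..n} \<and> \<tau> 1 = 1}"

definition Sym1coset :: "nat \<Rightarrow> nat \<Rightarrow> (nat \<Rightarrow> nat) set" where
  "Sym1coset n i = {\<tau> \<circ> Transposition.transpose 1 i | \<tau>. \<tau> \<in> Sym1 n}"

text \<open>The cycle C_m = (1, m, m-1, ..., 2): 1 maps to m, k maps to k-1 for 2 \<le> k \<le> m.\<close>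
definition Ccyc :: "nat \<Rightarrow> nat \<Rightarrow> nat" where
  "Ccyc m k = (if k = 1 then m else if 2 \<le> k \<and> k \<le> m then k - 1 else k)"

text \<open>For ms = [m_1,...,m_r]: C_{m_r}^{-1} o ... o C_{m_1}^{-1}.\<close>
definition Cprod_inv :: "nat list \<Rightarrow> nat \<Rightarrow> nat" where
  "Cprod_inv ms = fold (\<lambda>m f. inv (Ccyc m) \<circ> f) ms id"

definition triples :: "nat \<Rightarrow> (nat \<Rightarrow> nat) \<Rightarrow> ((nat \<Rightarrow> nat) \<times> nat set \<times> nat set) set" where
  "triples n \<sigma> = {(\<tau>, I, J). \<tau> \<in> Sym1 n \<and> I \<union> J = {2..n} \<and> I \<inter> J = {}
                        \<and> Aexp \<tau> I J = Aexp \<sigma> {2..n} {}}"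

end

theory Submission
  imports Defs
begin

definition pos :: "nat set \<Rightarrow> nat \<Rightarrow> int" where
  "pos J k = (if k \<in> J then - int k else int k)"

lemma wvar_eq: "wvar x y (a,b) = (if a < b \<and> x = a \<and> y = b then 1 else if a < b \<and> x = b \<and> y = a then -1 else 0)"
  unfolding wvar_def by auto

lemma Aexp_formula:
  assumes tp: "\<tau> permutes {1..n}" and J: "J \<subseteq> {2..n}"
  shows "Aexp \<tau> ({2..n}-J) J (a,b) = (if a<b \<and> a\<in>{1..n} \<and> b\<in>{1..n} then
            (if pos J (inv \<tau> a) < pos J (inv \<tau> b) then 1 else -1) else 0)"
proof -
  define e where "e k = (if k \<in> J then -1 else (1::int))" for k
  define T where "T = Sigma {2..n} (\<lambda>k. {1..<k})"
  define g where "g = (\<lambda>(k,l). e k * wvar (\<tau> l) (\<tau> k) (a,b))"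
  have fin: "finite T" unfolding T_def by auto
  have "Aexp \<tau> ({2..n}-J) J (a,b) = (\<Sum>k\<in>{2..n}. e k * (\<Sum>l\<in>{1..<k}. wvar (\<tau> l) (\<tau> k) (a,b)))"
  proof -
    have "(\<Sum>k\<in>{2..n}. e k * (\<Sum>l\<in>{1..<k}. wvar (\<tau> l) (\<tau> k) (a,b)))
       = (\<Sum>k\<in>{2..n}-J. e k * (\<Sum>l\<in>{1..<k}. wvar (\<tau> l) (\<tau> k) (a,b)))
         + (\<Sum>k\<in>J. e k * (\<Sum>l\<in>{1..<k}. wvar (\<tau> l) (\<tau> k) (a,b)))"
      by (rule sum.subset_diff[OF J], simp)
    also have "\<dots> = (\<Sum>k\<in>{2..n}-J. (\<Sum>l\<in>{1..<k}. wvar (\<tau> l) (\<tau> k) (a,b)))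
         - (\<Sum>k\<in>J. (\<Sum>l\<in>{1..<k}. wvar (\<tau> l) (\<tau> k) (a,b)))"
      by (simp add: e_def sum_negf)
    finally show ?thesis unfolding Aexp_def by simp
  qed
  also have "\<dots> = sum g T"
    unfolding T_def g_def by (simp add: sum_distrib_left sum.Sigma)
  finally have A: "Aexp \<tau> ({2..n}-J) J (a,b) = sum g T" .
  show ?thesis
  proof (cases "a<b \<and> a\<in>{1..n} \<and> b\<in>{1..n}")
    case False
    have "g x = 0" if "x \<in> T" for x
    proof -
      obtain k l where x: "x = (k,l)" and kl: "k \<in> {1..n}" "l \<in> {1..n}" using \<open>x\<in>T\<close> unfolding T_def by auto
      have "\<tau> k \<in> {1..n}" "\<tau> l \<in> {1..n}" using kl permutes_in_image[OF tp] by auto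
      then show ?thesis using False unfolding x g_def wvar_eq by auto
    qed
    then show ?thesis using A False by simp
  next
    case True
    define ia where "ia = inv \<tau> a"
    define ib where "ib = inv \<tau> b"
    have ia: "ia \<in> {1..n}" and ib: "ib \<in> {1..n}"
      using True permutes_in_image[OF permutes_inv[OF tp]] unfolding ia_def ib_def by auto
    have iab: "ia \<noteq> ib" using True permutes_inverses(1)[OF tp, of a] permutes_inverses(1)[OF tp, of b] unfolding ia_def ib_def by auto
    have eqa: "\<tau> l = a \<longleftrightarrow> l = ia" and eqb: "\<tau> l = b \<longleftrightarrow> l = ib" for l
      using permutes_inverses[OF tp] unfolding ia_def ib_def by metis+
    have "g x = (if (ib,ia) = x then e ib else 0) + (if (ia,ib) = x then - e ia else 0)" if "x \<in> T" for x
    proof -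
      obtain k l where x: "x = (k,l)" and kl: "l < k" using \<open>x\<in>T\<close> unfolding T_def by auto
      show ?thesis using True kl unfolding x g_def wvar_eq eqa eqb by auto
    qed
    then have "sum g T = (\<Sum>x\<in>T. (if (ib,ia) = x then e ib else 0) + (if (ia,ib) = x then - e ia else 0))"
      by (rule sum.cong[OF refl])
    also have "\<dots> = (if (ib,ia) \<in> T then e ib else 0) + (if (ia,ib) \<in> T then - e ia else 0)"
      by (simp add: sum.distrib fin)
    also have "\<dots> = (if ia < ib then e ib else - e ia)"
      using ia ib iab unfolding T_def by auto
    also have "\<dots> = (if pos J ia < pos J ib then 1 else -1)"
      using ia ib iab J unfolding e_def pos_def by auto
    finally show ?thesis using A True unfolding ia_def ib_def by simp
  qed
qed

lemma pos_inj: "pos J u = pos J v \<Longrightarrow> u = v"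
  unfolding pos_def by (auto split: if_splits)

definition good :: "nat \<Rightarrow> (nat \<Rightarrow> nat) \<Rightarrow> (nat \<Rightarrow> nat) \<Rightarrow> nat set \<Rightarrow> bool" where
  "good n \<sigma> \<tau> J = (\<forall>u\<in>{1..n}. \<forall>v\<in>{1..n}. pos J u < pos J v \<longleftrightarrow> inv \<sigma> (\<tau> u) < inv \<sigma> (\<tau> v))"

lemma bridge:
  assumes sp: "\<sigma> permutes {1..n}" and tp: "\<tau> permutes {1..n}" and J: "J \<subseteq> {2..n}"
  shows "Aexp \<tau> ({2..n}-J) J = Aexp \<sigma> {2..n} {} \<longleftrightarrow> good n \<sigma> \<tau> J"
proof -
  have F2: "Aexp \<sigma> {2..n} {} (a,b) = (if a<b \<and> a\<in>{1..n} \<and> b\<in>{1..n} then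
            (if inv \<sigma> a < inv \<sigma> b then 1 else -1) else 0)" for a b
    using Aexp_formula[OF sp, of "{}" a b] by (simp add: pos_def)
  have "Aexp \<tau> ({2..n}-J) J = Aexp \<sigma> {2..n} {} \<longleftrightarrow>
     (\<forall>a\<in>{1..n}. \<forall>b\<in>{1..n}. a<b \<longrightarrow> (pos J (inv \<tau> a) < pos J (inv \<tau> b) \<longleftrightarrow> inv \<sigma> a < inv \<sigma> b))"
  proof
    assume E: "Aexp \<tau> ({2..n}-J) J = Aexp \<sigma> {2..n} {}"
    show "\<forall>a\<in>{1..n}. \<forall>b\<in>{1..n}. a<b \<longrightarrow> (pos J (inv \<tau> a) < pos J (inv \<tau> b) \<longleftrightarrow> inv \<sigma> a < inv \<sigma> b)"
    proof (intro ballI impI)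
      fix a b assume "a \<in> {1..n}" "b \<in> {1..n}" "a < b"
      moreover have "Aexp \<tau> ({2..n}-J) J (a,b) = Aexp \<sigma> {2..n} {} (a,b)" using E by simp
      ultimately show "pos J (inv \<tau> a) < pos J (inv \<tau> b) \<longleftrightarrow> inv \<sigma> a < inv \<sigma> b"
        unfolding Aexp_formula[OF tp J] F2 by (auto split: if_splits)
    qed
  next
    assume P: "\<forall>a\<in>{1..n}. \<forall>b\<in>{1..n}. a<b \<longrightarrow> (pos J (inv \<tau> a) < pos J (inv \<tau> b) \<longleftrightarrow> inv \<sigma> a < inv \<sigma> b)"
    show "Aexp \<tau> ({2..n}-J) J = Aexp \<sigma> {2..n} {}"
    proof (rule ext, clarify)
      fix a b
      show "Aexp \<tau> ({2..n}-J) J (a,b) = Aexp \<sigma> {2..n} {} (a,b)"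
        unfolding Aexp_formula[OF tp J] F2 using P by auto
    qed
  qed
  also have "\<dots> \<longleftrightarrow> good n \<sigma> \<tau> J"
  proof
    assume P: "\<forall>a\<in>{1..n}. \<forall>b\<in>{1..n}. a<b \<longrightarrow> (pos J (inv \<tau> a) < pos J (inv \<tau> b) \<longleftrightarrow> inv \<sigma> a < inv \<sigma> b)"
    show "good n \<sigma> \<tau> J" unfolding good_def
    proof (intro ballI)
      fix u v assume u: "u \<in> {1..n}" and v: "v \<in> {1..n}"
      have a: "\<tau> u \<in> {1..n}" "\<tau> v \<in> {1..n}" using u v permutes_in_image[OF tp] by auto
      have iu: "inv \<tau> (\<tau> u) = u" "inv \<tau> (\<tau> v) = v" using permutes_inverses[OF tp] by auto
      have injs: "inv \<sigma> x = inv \<sigma> y \<Longrightarrow> x = y" for x y using permutes_inverses[OF sp] by metis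
      have injt: "\<tau> x = \<tau> y \<Longrightarrow> x = y" for x y using permutes_inverses[OF tp] by metis
      consider "\<tau> u < \<tau> v" | "\<tau> u = \<tau> v" | "\<tau> v < \<tau> u" by linarith
      then show "pos J u < pos J v \<longleftrightarrow> inv \<sigma> (\<tau> u) < inv \<sigma> (\<tau> v)"
      proof cases
        case 1 then show ?thesis using P a iu by (metis)
      next
        case 2 then show ?thesis using injt by auto
      next
        case 3
        then have "pos J v < pos J u \<longleftrightarrow> inv \<sigma> (\<tau> v) < inv \<sigma> (\<tau> u)" using P a iu by metis
        moreover have "u \<noteq> v" using 3 by auto
        ultimately show ?thesis using pos_inj[of J u v] injs[of "\<tau> u" "\<tau> v"] 3 by fastforce
      qed
    qed
  next
    assume G: "good n \<sigma> \<tau> J"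
    show "\<forall>a\<in>{1..n}. \<forall>b\<in>{1..n}. a<b \<longrightarrow> (pos J (inv \<tau> a) < pos J (inv \<tau> b) \<longleftrightarrow> inv \<sigma> a < inv \<sigma> b)"
    proof (intro ballI impI)
      fix a b assume a: "a \<in> {1..n}" and b: "b \<in> {1..n}"
      have "inv \<tau> a \<in> {1..n}" "inv \<tau> b \<in> {1..n}" using a b permutes_in_image[OF permutes_inv[OF tp]] by auto
      then show "pos J (inv \<tau> a) < pos J (inv \<tau> b) \<longleftrightarrow> inv \<sigma> a < inv \<sigma> b"
        using G permutes_inverses(1)[OF tp] unfolding good_def by metis
    qed
  qed
  finally show ?thesis .
qed

lemma rank_unique:
  fixes f :: "nat \<Rightarrow> 'a::linorder"
  assumes rp: "\<rho> permutes {1..n}" and a: "a \<in> {1..n}"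
    and ord: "\<forall>x\<in>{1..n}. f x < f a \<longleftrightarrow> \<rho> x < \<rho> a"
  shows "\<rho> a = card {x\<in>{1..n}. f x < f a} + 1"
proof -
  have "{x\<in>{1..n}. f x < f a} = {x\<in>{1..n}. \<rho> x < \<rho> a}" using ord by auto
  moreover have "\<rho> ` {x\<in>{1..n}. \<rho> x < \<rho> a} = {1..<\<rho> a}"
  proof -
    have "\<rho> a \<le> n" using a permutes_in_image[OF rp] by auto
    then have "\<rho> ` {x\<in>{1..n}. \<rho> x < \<rho> a} = {y\<in>{1..n}. y < \<rho> a}"
    proof (intro equalityI subsetI)
      fix y assume "y \<in> \<rho> ` {x\<in>{1..n}. \<rho> x < \<rho> a}"
      then show "y \<in> {y\<in>{1..n}. y < \<rho> a}" using permutes_in_image[OF rp] by auto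
    next
      fix y assume y: "y \<in> {y\<in>{1..n}. y < \<rho> a}"
      have "inv \<rho> y \<in> {1..n}" using y permutes_in_image[OF permutes_inv[OF rp]] by auto
      moreover have "\<rho> (inv \<rho> y) = y" by (rule permutes_inverses(1)[OF rp])
      ultimately show "y \<in> \<rho> ` {x\<in>{1..n}. \<rho> x < \<rho> a}" using y by (metis (mono_tags, lifting) image_eqI mem_Collect_eq)
    qed
    also have "\<dots> = {1..<\<rho> a}" using \<open>\<rho> a \<le> n\<close> by auto
    finally show ?thesis .
  qed
  moreover have "inj_on \<rho> {x\<in>{1..n}. \<rho> x < \<rho> a}"
    using permutes_inj[OF rp] by (auto intro: inj_on_subset)
  ultimately have "card {x\<in>{1..n}. f x < f a} = card {1..<\<rho> a}"
    by (metis card_image)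
  moreover have "\<rho> a \<ge> 1" using a permutes_in_image[OF rp] by auto
  ultimately show ?thesis by simp
qed

lemma rank_exists:
  fixes f :: "nat \<Rightarrow> 'a::linorder"
  assumes inj: "inj_on f {1..n}"
  shows "\<exists>\<rho>. \<rho> permutes {1..n} \<and> (\<forall>a\<in>{1..n}. \<forall>b\<in>{1..n}. f a < f b \<longleftrightarrow> \<rho> a < \<rho> b)"
proof -
  define S where "S = {1..n::nat}"
  define \<rho> where "\<rho> a = (if a \<in> S then card {x\<in>S. f x < f a} + 1 else a)" for a
  have fin: "finite S" unfolding S_def by simp
  have mono: "\<rho> a < \<rho> b" if "a \<in> S" "b \<in> S" "f a < f b" for a b
  proof -
    have "{x\<in>S. f x < f a} \<subset> {x\<in>S. f x < f b}" using that by auto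
    then have "card {x\<in>S. f x < f a} < card {x\<in>S. f x < f b}"
      by (rule psubset_card_mono[rotated]) (simp add: fin)
    then show ?thesis using that unfolding \<rho>_def by simp
  qed
  have iff: "f a < f b \<longleftrightarrow> \<rho> a < \<rho> b" if "a \<in> S" "b \<in> S" for a b
  proof
    assume "\<rho> a < \<rho> b"
    show "f a < f b"
    proof (rule ccontr)
      assume "\<not> f a < f b"
      then have "f b < f a \<or> a = b" using inj that unfolding S_def inj_on_def
        by (metis linorder_neqE)
      then show False using mono[of b a] that \<open>\<rho> a < \<rho> b\<close> by auto
    qed
  qed (use mono that in auto)
  have injr: "inj_on \<rho> S"
  proof (rule inj_onI)
    fix a b assume "a \<in> S" "b \<in> S" "\<rho> a = \<rho> b"
    then show "a = b" using iff[of a b] iff[of b a] inj unfolding S_def inj_on_def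
      by (metis less_irrefl linorder_neqE)
  qed
  have into: "\<rho> ` S \<subseteq> S"
  proof
    fix y assume "y \<in> \<rho> ` S"
    then obtain a where a: "a \<in> S" and y: "y = \<rho> a" by auto
    have "{x\<in>S. f x < f a} \<subseteq> S - {a}" by auto
    then have "card {x\<in>S. f x < f a} \<le> card (S - {a})" by (rule card_mono[rotated]) (simp add: fin)
    also have "\<dots> = n - 1" using a unfolding S_def by simp
    finally show "y \<in> S" using a y unfolding \<rho>_def S_def by auto
  qed
  have "bij_betw \<rho> S S"
    unfolding bij_betw_def using injr endo_inj_surj[OF fin into injr] by simp
  then have "\<rho> permutes S"
    by (rule bij_imp_permutes) (simp add: \<rho>_def)
  then show ?thesis using iff unfolding S_def by blast
qed

lemma good_unique:
  assumes sp: "\<sigma> permutes {1..n}" and tp: "\<tau> permutes {1..n}" and tp': "\<tau>' permutes {1..n}"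
    and g: "good n \<sigma> \<tau> J" and g': "good n \<sigma> \<tau>' J"
  shows "\<tau> = \<tau>'"
proof
  fix u
  show "\<tau> u = \<tau>' u"
  proof (cases "u \<in> {1..n}")
    case True
    have r1: "(inv \<sigma> \<circ> \<tau>) permutes {1..n}" by (rule permutes_compose[OF tp permutes_inv[OF sp]])
    have r2: "(inv \<sigma> \<circ> \<tau>') permutes {1..n}" by (rule permutes_compose[OF tp' permutes_inv[OF sp]])
    have "(inv \<sigma> \<circ> \<tau>) u = card {x\<in>{1..n}. pos J x < pos J u} + 1"
      by (rule rank_unique[OF r1 True]) (use g True in \<open>auto simp: good_def\<close>)
    moreover have "(inv \<sigma> \<circ> \<tau>') u = card {x\<in>{1..n}. pos J x < pos J u} + 1"
      by (rule rank_unique[OF r2 True]) (use g' True in \<open>auto simp: good_def\<close>)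
    ultimately have "inv \<sigma> (\<tau> u) = inv \<sigma> (\<tau>' u)" by simp
    then show ?thesis by (metis permutes_inverses(1)[OF sp])
  next
    case False
    then show ?thesis using permutes_not_in[OF tp] permutes_not_in[OF tp'] by simp
  qed
qed

definition Dcyc :: "nat \<Rightarrow> nat \<Rightarrow> nat" where
  "Dcyc m k = (if k = m then 1 else if 1 \<le> k \<and> k < m then k + 1 else k)"

lemma Dcyc_Ccyc: "2 \<le> m \<Longrightarrow> Dcyc m (Ccyc m x) = x"
  unfolding Dcyc_def Ccyc_def by auto

lemma Ccyc_Dcyc: "2 \<le> m \<Longrightarrow> Ccyc m (Dcyc m x) = x"
  unfolding Dcyc_def Ccyc_def by auto

lemma inv_Ccyc: "2 \<le> m \<Longrightarrow> inv (Ccyc m) = Dcyc m"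
  by (rule inv_equality) (simp_all add: Dcyc_Ccyc Ccyc_Dcyc)

lemma Ccyc_permutes:
  assumes "2 \<le> m" "m \<le> n" shows "Ccyc m permutes {1..n}"
  unfolding permutes_def
proof (intro conjI allI impI)
  fix x assume "x \<notin> {1..n}" then show "Ccyc m x = x" using assms unfolding Ccyc_def by auto
next
  fix y show "\<exists>!x. Ccyc m x = y"
    by (rule ex1I[of _ "Dcyc m y"]) (use assms Ccyc_Dcyc Dcyc_Ccyc in metis)+
qed

lemma Dcyc_permutes: "2 \<le> m \<Longrightarrow> m \<le> n \<Longrightarrow> Dcyc m permutes {1..n}"
  using permutes_inv[OF Ccyc_permutes] inv_Ccyc by metis

lemma Cprod_inv_Nil: "Cprod_inv [] = id"
  unfolding Cprod_inv_def by simp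

lemma Cprod_inv_snoc: "Cprod_inv (xs @ [x]) = inv (Ccyc x) \<circ> Cprod_inv xs"
  unfolding Cprod_inv_def by simp

lemma Cprod_fix: "(\<forall>m\<in>set ms. 2 \<le> m \<and> m < k) \<Longrightarrow> Cprod_inv ms k = k"
proof (induction ms rule: rev_induct)
  case Nil then show ?case by (simp add: Cprod_inv_Nil)
next
  case (snoc x xs)
  then show ?case by (simp add: Cprod_inv_snoc inv_Ccyc Dcyc_def)
qed

lemma Cprod_good:
  assumes "sorted_wrt (<) ms" "set ms \<subseteq> {2..n}"
  shows "Cprod_inv ms permutes {1..n} \<and>
    (\<forall>u\<in>{1..n}. \<forall>v\<in>{1..n}. pos (set ms) u < pos (set ms) v \<longleftrightarrow> Cprod_inv ms u < Cprod_inv ms v)"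
  using assms
proof (induction ms rule: rev_induct)
  case Nil then show ?case using permutes_id[of "{1..n}"] by (simp add: Cprod_inv_Nil pos_def id_def)
next
  case (snoc m xs)
  define P where "P = Cprod_inv xs"
  define J where "J = set xs"
  have sx: "sorted_wrt (<) xs" and lt: "\<forall>y\<in>J. y < m" using snoc.prems by (auto simp: sorted_wrt_append J_def)
  have m: "2 \<le> m" "m \<le> n" using snoc.prems by auto
  have Jsub: "J \<subseteq> {2..n}" using snoc.prems J_def by auto
  from snoc.IH[OF sx] Jsub have Pp: "P permutes {1..n}"
    and IH: "\<forall>u\<in>{1..n}. \<forall>v\<in>{1..n}. pos J u < pos J v \<longleftrightarrow> P u < P v"
    unfolding P_def J_def by auto
  have Pm: "P m = m" unfolding P_def by (rule Cprod_fix) (use lt Jsub J_def in auto)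
  have Pinj: "P u = P v \<Longrightarrow> u = v" for u v by (metis permutes_inverses(2)[OF Pp])
  have new: "Cprod_inv (xs @ [m]) = Dcyc m \<circ> P" unfolding P_def Cprod_inv_snoc inv_Ccyc[OF m(1)] ..
  have sset: "set (xs @ [m]) = insert m J" unfolding J_def by simp
  have perm: "(Dcyc m \<circ> P) permutes {1..n}" by (rule permutes_compose[OF Pp Dcyc_permutes[OF m]])
  have ord: "pos (insert m J) u < pos (insert m J) v \<longleftrightarrow> Dcyc m (P u) < Dcyc m (P v)"
    if u: "u \<in> {1..n}" and v: "v \<in> {1..n}" for u v
  proof -
    have Pu: "P u \<in> {1..n}" and Pv: "P v \<in> {1..n}" using u v permutes_in_image[OF Pp] by auto
    have mJ: "m \<notin> J" using lt by auto
    have Pum: "P u = m \<longleftrightarrow> u = m" "P v = m \<longleftrightarrow> v = m" using Pm Pinj by metis+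
    consider "u = m" "v = m" | "u = m" "v \<noteq> m" | "u \<noteq> m" "v = m" | "u \<noteq> m" "v \<noteq> m" by blast
    then show ?thesis
    proof cases
      case 1 then show ?thesis by simp
    next
      case 2
      have "pos (insert m J) u < pos (insert m J) v" using 2 lt u v mJ unfolding pos_def by auto
      moreover have "Dcyc m (P u) < Dcyc m (P v)" using 2 Pm Pv Pum m unfolding Dcyc_def by auto
      ultimately show ?thesis by simp
    next
      case 3
      have "\<not> pos (insert m J) u < pos (insert m J) v" using 3 lt u v mJ unfolding pos_def by auto
      moreover have "\<not> Dcyc m (P u) < Dcyc m (P v)" using 3 Pm Pu Pum m unfolding Dcyc_def by auto
      ultimately show ?thesis by simp
    next
      case 4
      have "pos (insert m J) u = pos J u" "pos (insert m J) v = pos J v" using 4 unfolding pos_def by auto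
      moreover have "Dcyc m (P u) < Dcyc m (P v) \<longleftrightarrow> P u < P v" using 4 Pum Pu Pv unfolding Dcyc_def by auto
      ultimately show ?thesis using IH u v by simp
    qed
  qed
  show ?case unfolding new sset using perm ord by (simp add: o_def)
qed

lemma part_J:
  assumes "I \<union> J = {2..n}" "I \<inter> J = {}"
  shows "J \<subseteq> {2..n}" "I = {2..n} - J"
  using assms by auto

lemma inv_fix: "\<sigma> permutes S \<Longrightarrow> \<sigma> a = b \<Longrightarrow> inv \<sigma> b = a"
  using permutes_inverses(2) by metis

lemma Cprod_triple:
  assumes sp: "\<sigma> permutes {1..n}" and si: "\<sigma> i = 1"
    and ms: "sorted_wrt (<) ms" "length ms = i - 1" "set ms \<subseteq> {2..n}" and i: "i \<ge> 1" "i \<le> n"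
  shows "(\<sigma> \<circ> Cprod_inv ms, {2..n} - set ms, set ms) \<in> triples n \<sigma>"
proof -
  define P where "P = Cprod_inv ms"
  define J where "J = set ms"
  have Pp: "P permutes {1..n}" and ord: "\<forall>u\<in>{1..n}. \<forall>v\<in>{1..n}. pos J u < pos J v \<longleftrightarrow> P u < P v"
    using Cprod_good[OF ms(1) ms(3)] unfolding P_def J_def by auto
  have n1: "1 \<le> n" using i by simp
  have one: "1 \<in> {1..n}" using n1 by simp
  have "P 1 = card {x\<in>{1..n}. pos J x < pos J 1} + 1"
    by (rule rank_unique[OF Pp one]) (use ord one in auto)
  also have "{x\<in>{1..n}. pos J x < pos J 1} = J"
    using ms(3) unfolding J_def pos_def by auto
  also have "card J = i - 1" using ms(1,2) unfolding J_def by (simp add: strict_sorted_iff distinct_card)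
  finally have P1: "P 1 = i" using i by simp
  have tp: "\<sigma> \<circ> P permutes {1..n}" by (rule permutes_compose[OF Pp sp])
  have "good n \<sigma> (\<sigma> \<circ> P) J" unfolding good_def using ord permutes_inverses(2)[OF sp] by simp
  then have "Aexp (\<sigma> \<circ> P) ({2..n}-J) J = Aexp \<sigma> {2..n} {}"
    using bridge[OF sp tp] ms(3) J_def by simp
  moreover have "\<sigma> \<circ> P \<in> Sym1 n" using tp P1 si unfolding Sym1_def by simp
  ultimately show ?thesis unfolding triples_def P_def J_def using ms(3) by auto
qed

theorem lemma3p4:
  fixes n :: nat
  assumes "n \<ge> 2"
  shows "(\<forall>\<tau> I J. \<tau> \<in> Sym1 n \<and> I \<union> J = {2..n} \<and> I \<inter> J = {} \<longrightarrow>
            (\<exists>\<sigma> \<in> Sym n. Aexp \<sigma> {2..n} {} = Aexp \<tau> I J))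
       \<and> (\<forall>\<sigma> \<in> Sym1 n. triples n \<sigma> = {(\<sigma>, {2..n}, {})})
       \<and> (\<forall>i \<in> {2..n}. \<forall>\<sigma> \<in> Sym1coset n i.
            triples n \<sigma> =
              (\<lambda>ms. (\<sigma> \<circ> Cprod_inv ms, {2..n} - set ms, set ms)) `
                {ms. sorted_wrt (<) ms \<and> length ms = i - 1 \<and> set ms \<subseteq> {2..n}}
          \<and> inj_on (\<lambda>ms. (\<sigma> \<circ> Cprod_inv ms, {2..n} - set ms, set ms))
                {ms. sorted_wrt (<) ms \<and> length ms = i - 1 \<and> set ms \<subseteq> {2..n}})"
proof (intro conjI allI impI ballI)
  fix \<tau> I J
  assume H: "\<tau> \<in> Sym1 n \<and> I \<union> J = {2..n} \<and> I \<inter> J = {}"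
  then have tp: "\<tau> permutes {1..n}" unfolding Sym1_def by auto
  have J: "J \<subseteq> {2..n}" and I: "I = {2..n} - J" using part_J H by auto
  have "inj_on (pos J) {1..n}" by (meson inj_onI pos_inj)
  then obtain \<rho> where rp: "\<rho> permutes {1..n}"
    and ord: "\<forall>a\<in>{1..n}. \<forall>b\<in>{1..n}. pos J a < pos J b \<longleftrightarrow> \<rho> a < \<rho> b"
    using rank_exists by blast
  define \<sigma> where "\<sigma> = \<tau> \<circ> inv \<rho>"
  have sp: "\<sigma> permutes {1..n}" unfolding \<sigma>_def by (rule permutes_compose[OF permutes_inv[OF rp] tp])
  have "\<sigma> (\<rho> u) = \<tau> u" for u unfolding \<sigma>_def by (simp add: permutes_inverses(2)[OF rp])
  then have "inv \<sigma> (\<tau> u) = \<rho> u" for u by (metis inv_fix[OF sp])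
  then have "good n \<sigma> \<tau> J" unfolding good_def using ord by simp
  then have "Aexp \<tau> I J = Aexp \<sigma> {2..n} {}" using bridge[OF sp tp J] I by simp
  then show "\<exists>\<sigma> \<in> Sym n. Aexp \<sigma> {2..n} {} = Aexp \<tau> I J" using sp unfolding Sym_def by auto
next
  fix \<sigma> assume "\<sigma> \<in> Sym1 n"
  then have sp: "\<sigma> permutes {1..n}" and s1: "\<sigma> 1 = 1" unfolding Sym1_def by auto
  have is1: "inv \<sigma> 1 = 1" by (rule inv_fix[OF sp s1])
  have gs: "good n \<sigma> \<sigma> {}" unfolding good_def pos_def using permutes_inverses(2)[OF sp] by simp
  show "triples n \<sigma> = {(\<sigma>, {2..n}, {})}"
  proof (intro equalityI subsetI)
    fix x assume "x \<in> triples n \<sigma>"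
    then obtain \<tau> I J where x: "x = (\<tau>, I, J)" and tS: "\<tau> \<in> Sym1 n" and IJ: "I \<union> J = {2..n}" "I \<inter> J = {}"
      and E: "Aexp \<tau> I J = Aexp \<sigma> {2..n} {}" unfolding triples_def by auto
    have tp: "\<tau> permutes {1..n}" and t1: "\<tau> 1 = 1" using tS unfolding Sym1_def by auto
    have J: "J \<subseteq> {2..n}" and I: "I = {2..n} - J" using part_J IJ by auto
    have g: "good n \<sigma> \<tau> J" using bridge[OF sp tp J] E I by simp
    have J0: "J = {}"
    proof (rule ccontr)
      assume "J \<noteq> {}"
      then obtain k where k: "k \<in> J" by auto
      have kS: "k \<in> {1..n}" and one: "1 \<in> {1..n}" using k J by auto
      have "pos J k < pos J 1" using k J unfolding pos_def by auto
      then have "inv \<sigma> (\<tau> k) < inv \<sigma> (\<tau> 1)" using g kS one unfolding good_def by blast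
      moreover have "inv \<sigma> (\<tau> k) \<in> {1..n}"
        using kS permutes_in_image[OF tp] permutes_in_image[OF permutes_inv[OF sp]] by auto
      ultimately show False using t1 is1 by auto
    qed
    have "\<tau> = \<sigma>" using good_unique[OF sp tp sp] g gs J0 by simp
    then show "x \<in> {(\<sigma>, {2..n}, {}::nat set)}" using x I J0 by simp
  next
    fix x assume "x \<in> {(\<sigma>, {2..n}, {}::nat set)}"
    moreover have "Aexp \<sigma> ({2..n} - {}) {} = Aexp \<sigma> {2..n} {}" by simp
    ultimately show "x \<in> triples n \<sigma>" using \<open>\<sigma> \<in> Sym1 n\<close> unfolding triples_def by auto
  qed
next
  fix i \<sigma> assume i: "i \<in> {2..n}" and "\<sigma> \<in> Sym1coset n i"
  then obtain \<tau>0 where t0: "\<tau>0 \<in> Sym1 n" and sdef: "\<sigma> = \<tau>0 \<circ> Transposition.transpose 1 i"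
    unfolding Sym1coset_def by auto
  have sp: "\<sigma> permutes {1..n}" unfolding sdef
    by (rule permutes_compose[OF permutes_swap_id]) (use i t0 in \<open>auto simp: Sym1_def\<close>)
  have si: "\<sigma> i = 1" using t0 unfolding sdef Sym1_def by simp
  have isi: "inv \<sigma> 1 = i" by (rule inv_fix[OF sp si])
  define M where "M = {ms. sorted_wrt (<) ms \<and> length ms = i - 1 \<and> set ms \<subseteq> {2..n}}"
  have A: "(\<sigma> \<circ> Cprod_inv ms, {2..n} - set ms, set ms) \<in> triples n \<sigma>" if "ms \<in> M" for ms
    using Cprod_triple[OF sp si] that i unfolding M_def by auto
  show "triples n \<sigma> = (\<lambda>ms. (\<sigma> \<circ> Cprod_inv ms, {2..n} - set ms, set ms)) `
                {ms. sorted_wrt (<) ms \<and> length ms = i - 1 \<and> set ms \<subseteq> {2..n}}"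
    unfolding M_def[symmetric]
  proof (intro equalityI subsetI)
    fix x assume "x \<in> triples n \<sigma>"
    then obtain \<tau> I J where x: "x = (\<tau>, I, J)" and tS: "\<tau> \<in> Sym1 n" and IJ: "I \<union> J = {2..n}" "I \<inter> J = {}"
      and E: "Aexp \<tau> I J = Aexp \<sigma> {2..n} {}" unfolding triples_def by auto
    have tp: "\<tau> permutes {1..n}" and t1: "\<tau> 1 = 1" using tS unfolding Sym1_def by auto
    have J: "J \<subseteq> {2..n}" and I: "I = {2..n} - J" using part_J IJ by auto
    have g: "good n \<sigma> \<tau> J" using bridge[OF sp tp J] E I by simp
    have one: "1 \<in> {1..n}" using i by auto
    have r: "(inv \<sigma> \<circ> \<tau>) permutes {1..n}" by (rule permutes_compose[OF tp permutes_inv[OF sp]])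
    have "(inv \<sigma> \<circ> \<tau>) 1 = card {x\<in>{1..n}. pos J x < pos J 1} + 1"
      by (rule rank_unique[OF r one]) (use g one in \<open>auto simp: good_def\<close>)
    also have "{x\<in>{1..n}. pos J x < pos J 1} = J" using J unfolding pos_def by auto
    finally have cJ: "card J = i - 1" using t1 isi by (simp add: o_def)
    have "finite J" using J finite_subset by blast
    then obtain ms where ms: "sorted_wrt (<) ms" "set ms = J" "length ms = card J"
      using sorted_list_of_set.finite_set_strict_sorted by blast
    have msM: "ms \<in> M" unfolding M_def using ms cJ J by auto
    from A[OF msM] have "Aexp (\<sigma> \<circ> Cprod_inv ms) I J = Aexp \<sigma> {2..n} {}"
      and tp': "\<sigma> \<circ> Cprod_inv ms permutes {1..n}"
      unfolding triples_def Sym1_def using ms I by auto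
    then have "good n \<sigma> (\<sigma> \<circ> Cprod_inv ms) J" using bridge[OF sp tp' J] I by simp
    then have "\<tau> = \<sigma> \<circ> Cprod_inv ms" using good_unique[OF sp tp tp'] g by simp
    then show "x \<in> (\<lambda>ms. (\<sigma> \<circ> Cprod_inv ms, {2..n} - set ms, set ms)) ` M"
      using x I ms msM by auto
  next
    fix x assume "x \<in> (\<lambda>ms. (\<sigma> \<circ> Cprod_inv ms, {2..n} - set ms, set ms)) ` M"
    then show "x \<in> triples n \<sigma>" using A by auto
  qed
next
  fix i \<sigma>
  show "inj_on (\<lambda>ms. (\<sigma> \<circ> Cprod_inv ms, {2..n} - set ms, set ms))
                {ms. sorted_wrt (<) ms \<and> length ms = i - 1 \<and> set ms \<subseteq> {2..n}}"
    by (rule inj_onI) (auto intro: strict_sorted_equal)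
qed

end
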